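(* Let $\mathbf{L}\in\mathbb{R}^{n\times n}$ be symmetric and $\mathbf{V}\in\mathbb{R}^{n\times p}$ ($0\le p\le n$) of full column rank, such that $\widetilde{\mathbf{L}}=(\mathbf{I}-\mathbf{Q}\mathbf{Q}^\top)\mathbf{L}(\mathbf{I}-\mathbf{Q}\mathbf{Q}^\top)$ is positive semi-definite, where $\mathbf{Q}\in\mathbb{R}^{n\times p}$ is an orthonormal basis of the column span of $\mathbf{V}$. Let $\sigma^2>0$ and, for $\varepsilon>0$, let $$\mathbf{M}_\varepsilon=(\mathbf{L}+\varepsilon^{-1}\mathbf{V}\mathbf{V}^\top)(\mathbf{L}+\sigma^2\mathbf{I}+\varepsilon^{-1}\mathbf{V}\mathbf{V}^\top)^{-1}.$$ Then as $\varepsilon\to0$, $$\mathbf{M}_\varepsilon=\mathbf{Q}\mathbf{Q}^\top+\widetilde{\mathbf{U}}\widetilde{\boldsymbol\Lambda}(\widetilde{\boldsymbol\Lambda}+\sigma^2\mathbf{I})^{-1}\widetilde{\mathbf{U}}^\top+O(\varepsilon)=\mathbf{Q}\mathbf{Q}^\top+\widetilde{\mathbf{L}}(\widetilde{\mathbf{L}}+\sigma^2\mathbf{I})^{-1}+O(\varepsilon),$$ where $\widetilde{\mathbf{L}}=\widetilde{\mathbf{U}}\widetilde{\boldsymbol\Lambda}\widetilde{\mathbf{U}}^\top$ is the truncated spectral decomposition of $\widetilde{\mathbf{L}}$ ($\widetilde{\boldsymbol\Lambda}$ the diagonal matrix of its nonzero eigenvalues, $\widetilde{\mathbf{U}}$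 the corresponding orthonormal eigenvectors).
   Context: $\mathbf{M}_\varepsilon$ is the smoother matrix of GP regression with covariance matrix $\mathbf{L}+\varepsilon^{-1}\mathbf{V}\mathbf{V}^\top$ and noise variance $\sigma^2$. *)

theory Defs
  imports "Jordan_Normal_Form.Gauss_Jordan_Elimination" "HOL-Library.Landau_Symbols"
begin

text \<open>Matrix inverse (for singular/non-square matrices a junk value, the zero matrix).\<close>
definition minv :: "real mat \<Rightarrow> real mat" where
  "minv A = (case mat_inverse A of Some B \<Rightarrow> B | None \<Rightarrow> 0\<^sub>m (dim_row A) (dim_col A))"

definition colspace :: "real mat \<Rightarrow> real vec set" where
  "colspace A = {A *\<^sub>v x | x. x \<in> carrier_vec (dim_col A)}"

definition full_col_rank :: "real mat \<Rightarrow> bool" where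
  "full_col_rank A = (\<forall>x \<in> carrier_vec (dim_col A). A *\<^sub>v x = 0\<^sub>v (dim_row A) \<longrightarrow> x = 0\<^sub>v (dim_col A))"

definition psd_mat :: "nat \<Rightarrow> real mat \<Rightarrow> bool" where
  "psd_mat n A = (A \<in> carrier_mat n n \<and> A\<^sup>T = A \<and> (\<forall>x \<in> carrier_vec n. 0 \<le> x \<bullet> (A *\<^sub>v x)))"

definition Ltilde :: "nat \<Rightarrow> real mat \<Rightarrow> real mat \<Rightarrow> real mat" where
  "Ltilde n L Q = (1\<^sub>m n - Q * Q\<^sup>T) * L * (1\<^sub>m n - Q * Q\<^sup>T)"

definition smoother :: "nat \<Rightarrow> real mat \<Rightarrow> real mat \<Rightarrow> real \<Rightarrow> real \<Rightarrow> real mat" where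
  "smoother n L V s2 eps =
     (L + (1 / eps) \<cdot>\<^sub>m (V * V\<^sup>T)) * minv (L + s2 \<cdot>\<^sub>m 1\<^sub>m n + (1 / eps) \<cdot>\<^sub>m (V * V\<^sup>T))"

definition trunc_spectral :: "nat \<Rightarrow> nat \<Rightarrow> real mat \<Rightarrow> real mat \<Rightarrow> real mat \<Rightarrow> bool" where
  "trunc_spectral n r A U Lam = (U \<in> carrier_mat n r \<and> Lam \<in> carrier_mat r r \<and>
     U\<^sup>T * U = 1\<^sub>m r \<and> diagonal_mat Lam \<and> (\<forall>i<r. Lam $$ (i,i) \<noteq> 0) \<and> A = U * Lam * U\<^sup>T)"

definition bigO_eps :: "nat \<Rightarrow> (real \<Rightarrow> real mat) \<Rightarrow> bool" where
  "bigO_eps n F = (\<forall>i<n. \<forall>j<n. (\<lambda>eps. F eps $$ (i,j)) \<in> O[at_right 0](\<lambda>eps. eps))"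

end

theory Submission
  imports Defs "Jordan_Normal_Form.Determinant"
begin


lemma cs_sum:
  fixes a b :: "nat \<Rightarrow> real"
  shows "(\<Sum>i\<in>I. a i * b i)^2 \<le> (\<Sum>i\<in>I. (a i)^2) * (\<Sum>i\<in>I. (b i)^2)"
proof -
  have "0 \<le> (\<Sum>i\<in>I. \<Sum>j\<in>I. (a i * b j - a j * b i)^2)"
    by (intro sum_nonneg) auto
  also have "\<dots> = (\<Sum>i\<in>I. \<Sum>j\<in>I. (a i)^2 * (b j)^2) + (\<Sum>i\<in>I. \<Sum>j\<in>I. (b i)^2 * (a j)^2) - 2 * (\<Sum>i\<in>I. \<Sum>j\<in>I. (a i * b i) * (a j * b j))"
    by (simp add: sum_subtractf sum.distrib sum_distrib_left power2_eq_square algebra_simps)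
  also have "\<dots> = 2 * ((\<Sum>i\<in>I. (a i)^2) * (\<Sum>i\<in>I. (b i)^2)) - 2 * (\<Sum>i\<in>I. a i * b i)^2"
    unfolding sum_product[symmetric] power2_eq_square[of "sum _ _"] by simp
  finally show ?thesis by simp
qed

definition nv :: "real vec \<Rightarrow> real" where "nv v = sqrt (v \<bullet> v)"

lemma self_sp: "(v::real vec) \<bullet> v = (\<Sum>i\<in>{0..<dim_vec v}. (v $ i)^2)"
  unfolding scalar_prod_def by (simp add: power2_eq_square)

lemma self_sp_ge0: "0 \<le> (v::real vec) \<bullet> v"
  unfolding self_sp by (intro sum_nonneg) auto

lemma self_sp_eq0: assumes "(v::real vec) \<in> carrier_vec n" "v \<bullet> v = 0" shows "v = 0\<^sub>v n"
proof (intro eq_vecI)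
  fix i assume "i < dim_vec (0\<^sub>v n)"
  hence i: "i < dim_vec v" using assms by auto
  have "(\<Sum>i\<in>{0..<dim_vec v}. (v $ i)^2) = 0" using assms self_sp by metis
  hence "\<forall>j\<in>{0..<dim_vec v}. (v $ j)^2 = 0" by (subst (asm) sum_nonneg_eq_0_iff) auto
  with i show "v $ i = 0\<^sub>v n $ i" using assms by auto
qed (use assms in auto)

lemma cs_vec: assumes "(u::real vec) \<in> carrier_vec n" "v \<in> carrier_vec n"
  shows "(u \<bullet> v)^2 \<le> (u \<bullet> u) * (v \<bullet> v)"
  using cs_sum[of "\<lambda>i. u $ i" "\<lambda>i. v $ i" "{0..<n}"] assms
  unfolding self_sp unfolding scalar_prod_def by auto

lemma nv_ge0: "0 \<le> nv v" unfolding nv_def using self_sp_ge0[of v] by simp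

lemma nv_sq: "(nv v)^2 = v \<bullet> v" unfolding nv_def by (rule real_sqrt_pow2[OF self_sp_ge0])

lemma cs_nv: assumes "(u::real vec) \<in> carrier_vec n" "v \<in> carrier_vec n"
  shows "\<bar>u \<bullet> v\<bar> \<le> nv u * nv v"
proof -
  have "\<bar>u \<bullet> v\<bar> = sqrt ((u \<bullet> v)^2)" by (rule real_sqrt_abs[symmetric])
  also have "\<dots> \<le> sqrt ((u \<bullet> u) * (v \<bullet> v))" using cs_vec[OF assms] by (simp only: real_sqrt_le_iff)
  also have "\<dots> = nv u * nv v" unfolding nv_def by (rule real_sqrt_mult)
  finally show ?thesis .
qed

lemma nv_add: assumes "(u::real vec) \<in> carrier_vec n" "v \<in> carrier_vec n"
  shows "nv (u + v) \<le> nv u + nv v"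
proof -
  have uv: "u + v \<in> carrier_vec n" using assms by simp
  have e1: "(u + v) \<bullet> (u + v) = u \<bullet> (u + v) + v \<bullet> (u + v)"
    by (rule add_scalar_prod_distrib[OF assms uv])
  have e2: "u \<bullet> (u + v) = u \<bullet> u + u \<bullet> v" by (rule scalar_prod_add_distrib[OF assms(1) assms])
  have e3: "v \<bullet> (u + v) = v \<bullet> u + v \<bullet> v" by (rule scalar_prod_add_distrib[OF assms(2) assms])
  have c: "v \<bullet> u = u \<bullet> v" by (rule comm_scalar_prod[OF assms(2,1)])
  have e: "(u + v) \<bullet> (u + v) = u \<bullet> u + 2 * (u \<bullet> v) + v \<bullet> v" 
    unfolding e1 e2 e3 c by simp
  have "u \<bullet> v \<le> nv u * nv v" using cs_nv[OF assms] by simp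
  hence "(nv (u+v))^2 \<le> (nv u + nv v)^2" unfolding nv_sq e power2_sum by (simp add: nv_sq)
  thus ?thesis by (rule power2_le_imp_le) (simp add: nv_ge0 add_nonneg_nonneg)
qed

lemma idx_le_nv: assumes "(v::real vec) \<in> carrier_vec n" "i < n" shows "\<bar>v $ i\<bar> \<le> nv v"
proof -
  have "v \<bullet> unit_vec n i = v $ i" using assms by simp
  hence "\<bar>v $ i\<bar> \<le> nv v * nv (unit_vec n i)" using cs_nv[OF assms(1), of "unit_vec n i"] by simp
  moreover have "nv (unit_vec n i) = 1" unfolding nv_def using assms by simp
  ultimately show ?thesis by simp
qed

definition fro :: "real mat \<Rightarrow> real" where
  "fro A = (\<Sum>i\<in>{0..<dim_row A}. row A i \<bullet> row A i)"

lemma fro_ge0: "0 \<le> fro A" unfolding fro_def by (intro sum_nonneg) (simp add: self_sp_ge0)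

lemma mat_vec_bound: assumes "A \<in> carrier_mat m k" "v \<in> carrier_vec k"
  shows "nv (A *\<^sub>v v) \<le> sqrt (fro A) * nv v"
proof -
  have "(A *\<^sub>v v) \<bullet> (A *\<^sub>v v) = (\<Sum>i\<in>{0..<m}. (row A i \<bullet> v)^2)"
    using assms unfolding self_sp by simp
  also have "\<dots> \<le> (\<Sum>i\<in>{0..<m}. (row A i \<bullet> row A i) * (v \<bullet> v))"
    using assms by (intro sum_mono cs_vec[of _ k]) auto
  also have "\<dots> = fro A * (v \<bullet> v)" unfolding fro_def using assms by (simp add: sum_distrib_right)
  finally have "sqrt ((A *\<^sub>v v) \<bullet> (A *\<^sub>v v)) \<le> sqrt (fro A * (v \<bullet> v))" by simp
  thus ?thesis unfolding nv_def by (simp add: real_sqrt_mult)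
qed

lemma smult_mat_vec: assumes "A \<in> carrier_mat m k" "v \<in> carrier_vec k"
  shows "(c \<cdot>\<^sub>m A) *\<^sub>v v = c \<cdot>\<^sub>v (A *\<^sub>v (v::real vec))"
  using assms by (intro eq_vecI) auto

lemma minv_inv: assumes A: "A \<in> carrier_mat n n"
  and inj: "\<And>v. v \<in> carrier_vec n \<Longrightarrow> A *\<^sub>v v = 0\<^sub>v n \<Longrightarrow> v = 0\<^sub>v n"
  shows "A * minv A = 1\<^sub>m n \<and> minv A \<in> carrier_mat n n"
proof -
  have "det A \<noteq> 0" using det_0_iff_vec_prod_zero[OF A] inj by auto
  hence U: "A \<in> Units (ring_mat TYPE(real) n n)" by (rule det_non_zero_imp_unit[OF A])
  obtain B where "mat_inverse A = Some B"
    using mat_inverse(1)[OF A, of n] U by (cases "mat_inverse A") auto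
  thus ?thesis using mat_inverse(2)[OF A, of B] unfolding minv_def by auto
qed

lemma col_in_colspace: assumes "A \<in> carrier_mat n k" "j < k" shows "col A j \<in> colspace A"
proof -
  have "A *\<^sub>v unit_vec k j = col A j" using assms by (intro eq_vecI) auto
  thus ?thesis unfolding colspace_def using assms by (metis (mono_tags, lifting) carrier_matD(2) mem_Collect_eq unit_vec_carrier)
qed

lemma colspace_factor: assumes A: "A \<in> carrier_mat n k" and B: "B \<in> carrier_mat n m"
  and sub: "colspace A \<subseteq> colspace B"
  shows "\<exists>T \<in> carrier_mat m k. A = B * T"
proof -
  have "\<forall>j. \<exists>y. j < k \<longrightarrow> y \<in> carrier_vec m \<and> B *\<^sub>v y = col A j"
  proof (intro allI)
    fix j show "\<exists>y. j < k \<longrightarrow> y \<in> carrier_vec m \<and> B *\<^sub>v y = col A j"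
    proof (cases "j < k")
      case True
      then have "col A j \<in> colspace B" using col_in_colspace[OF A] sub by auto
      then show ?thesis unfolding colspace_def using B by auto
    qed auto
  qed
  then obtain y where y: "\<And>j. j < k \<Longrightarrow> y j \<in> carrier_vec m \<and> B *\<^sub>v y j = col A j" by metis
  define T where "T = mat m k (\<lambda>(i,j). y j $ i)"
  have T: "T \<in> carrier_mat m k" unfolding T_def by auto
  have colT: "col T j = y j" if "j < k" for j
    using y[OF that] that unfolding T_def by (intro eq_vecI) auto
  have "A = B * T"
  proof (intro eq_matI)
    fix i j assume i: "i < dim_row (B * T)" and j: "j < dim_col (B * T)"
    have "(B * T) $$ (i,j) = row B i \<bullet> y j" using i j T colT by simp
    also have "\<dots> = (B *\<^sub>v y j) $ i" using i B by simp
    also have "\<dots> = A $$ (i,j)" using y[of j] i j A B T by simp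
    finally show "A $$ (i,j) = (B * T) $$ (i,j)" by simp
  qed (use A B T in auto)
  thus ?thesis using T by auto
qed

lemma real_core:
  fixes al be ze W nu de c1 fS s2 eps q :: real
  assumes al: "0 \<le> al" and be: "0 \<le> be" and ze: "0 \<le> ze" and W: "0 \<le> W" and nu: "0 \<le> nu"
    and de: "0 \<le> de" and c1: "0 \<le> c1" and fS: "0 \<le> fS" and s2: "0 < s2" and eps: "0 < eps"
    and h1: "ze \<le> c1 * al" and h2: "s2 * be \<le> c1 * al" and h3: "al^2 \<le> fS * nu"
    and h4: "q + s2 * de + (1/eps) * nu \<le> al * W" and h5: "q \<ge> -(al*ze) - 2*be*ze"
    and h6: "eps < 1 / (2 * (fS + 1) * (c1 + 2*c1^2/s2 + 1))"
  shows "al + be \<le> (1 + c1/s2) * (2*(fS+1)) * eps * W"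
proof -
  define K where "K = c1 + 2*c1^2/s2"
  have K: "0 \<le> K" unfolding K_def using c1 s2 by simp
  have beb: "be \<le> c1 * al / s2" using h2 s2 by (simp add: field_simps)
  have "al*ze + 2*be*ze \<le> al * (c1 * al) + 2 * (c1 * al / s2) * (c1 * al)"
    using h1 beb al be ze c1 s2
    by (intro add_mono mult_mono mult_left_mono) (auto intro!: mult_nonneg_nonneg divide_nonneg_pos)
  also have "\<dots> = K * al^2" unfolding K_def by (simp add: power2_eq_square field_simps)
  finally have t1: "al*ze + 2*be*ze \<le> K * al^2" .
  have "0 \<le> s2 * de" using s2 de by simp
  hence t2: "(1/eps) * nu \<le> al * W + K * al^2" using h4 h5 t1 by linarith
  have pos: "0 < 2 * (fS + 1) * (K + 1)" using fS K by simp
  have e2: "eps * (2 * (fS + 1) * (K + 1)) < 1" using h6 pos unfolding K_def[symmetric]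
    by (simp add: pos_less_divide_eq)
  have t3: "al^2 \<le> (fS + 1) * nu" using h3 nu by (simp add: algebra_simps)
  define D where "D = (fS+1)*eps"
  have D: "0 < D" unfolding D_def using fS eps by simp
  have t4: "al^2 / D \<le> al * W + K * al^2"
  proof -
    have "al^2 / D \<le> ((fS + 1) * nu) / D"
      using t3 D by (intro divide_right_mono) auto
    also have "\<dots> = (1/eps) * nu" unfolding D_def using fS by simp
    finally show ?thesis using t2 by simp
  qed
  have t5: "(K+1) * al^2 \<le> al^2 / (2 * D)"
  proof -
    have "(K+1) * al^2 * (2 * D) = (eps * (2 * (fS + 1) * (K + 1))) * al^2"
      unfolding D_def by (simp add: algebra_simps)
    also have "\<dots> \<le> 1 * al^2" using e2 by (intro mult_right_mono) auto
    finally have "(K+1) * al^2 * (2 * D) \<le> al^2" by simp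
    thus ?thesis using D by (simp add: pos_le_divide_eq)
  qed
  have t6: "al^2 / (2 * D) \<le> al * W"
  proof -
    have "al^2 / D = 2 * (al^2 / (2 * D))" using D by (simp add: field_simps)
    moreover have "K*al^2 \<le> (K+1)*al^2" by (simp add: algebra_simps)
    ultimately show ?thesis using t4 t5 by linarith
  qed
  have t7: "al \<le> 2 * D * W"
  proof (cases "al = 0")
    case True thus ?thesis using D W by simp
  next
    case False
    hence alp: "0 < al" using al by simp
    have "al * al \<le> (al * W) * (2 * D)" using t6 D
      by (simp add: pos_divide_le_eq power2_eq_square)
    hence "al * al \<le> al * (2 * D * W)" by (simp add: algebra_simps)
    thus ?thesis using alp by simp
  qed
  have "al + be \<le> (1 + c1/s2) * al" using beb by (simp add: algebra_simps)
  also have "\<dots> \<le> (1 + c1/s2) * (2 * D * W)"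
    using t7 c1 s2 by (intro mult_left_mono) auto
  finally show ?thesis unfolding D_def by (simp add: algebra_simps)
qed

lemma R_apply: assumes Q: "Q \<in> carrier_mat n p" and x: "x \<in> carrier_vec n"
  shows "(1\<^sub>m n - Q * Q\<^sup>T) *\<^sub>v x = x - Q *\<^sub>v (Q\<^sup>T *\<^sub>v (x :: real vec))"
proof -
  have "(1\<^sub>m n - Q * Q\<^sup>T) *\<^sub>v x = 1\<^sub>m n *\<^sub>v x - (Q * Q\<^sup>T) *\<^sub>v x"
    by (rule minus_mult_distrib_mat_vec) (use Q x in auto)
  also have "\<dots> = x - Q *\<^sub>v (Q\<^sup>T *\<^sub>v x)" using Q x by auto
  finally show ?thesis .
qed

lemma QtQ_apply: assumes Q: "Q \<in> carrier_mat n p" and QQ: "Q\<^sup>T * Q = 1\<^sub>m p" and u: "u \<in> carrier_vec p"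
  shows "Q\<^sup>T *\<^sub>v (Q *\<^sub>v u) = (u :: real vec)"
proof -
  have "Q\<^sup>T *\<^sub>v (Q *\<^sub>v u) = (Q\<^sup>T * Q) *\<^sub>v u" by (rule assoc_mult_mat_vec[symmetric]) (use Q u in auto)
  thus ?thesis using QQ u by simp
qed

lemma sp_transp: assumes "A \<in> carrier_mat nr nc" "x \<in> carrier_vec nc" "y \<in> carrier_vec nr"
  shows "y \<bullet> (A *\<^sub>v x) = (A\<^sup>T *\<^sub>v y) \<bullet> (x :: real vec)"
  using transpose_vec_mult_scalar[OF assms] by simp

lemma core:
  fixes L V Q S T :: "real mat"
  assumes L: "L \<in> carrier_mat n n" and Ls: "L\<^sup>T = L"
    and V: "V \<in> carrier_mat n p" and Q: "Q \<in> carrier_mat n p" and QQ: "Q\<^sup>T * Q = 1\<^sub>m p"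
    and S: "S \<in> carrier_mat p p" and QVS: "Q = V * S"
    and T: "T \<in> carrier_mat p p" and VQT: "V = Q * T"
    and psd: "\<forall>x\<in>carrier_vec n. 0 \<le> x \<bullet> (Ltilde n L Q *\<^sub>v x)"
    and s2: "s2 > 0"
  shows "\<exists>e0>0. \<exists>C. \<forall>eps d w. 0 < eps \<longrightarrow> eps < e0 \<longrightarrow> d \<in> carrier_vec n \<longrightarrow> w \<in> carrier_vec n \<longrightarrow>
      (L + s2 \<cdot>\<^sub>m 1\<^sub>m n + (1/eps) \<cdot>\<^sub>m (V * V\<^sup>T)) *\<^sub>v d = w \<longrightarrow> (1\<^sub>m n - Q * Q\<^sup>T) *\<^sub>v w = 0\<^sub>v n \<longrightarrow>
      nv d \<le> C * eps * nv (Q\<^sup>T *\<^sub>v w)"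
proof -
  define R where "R = 1\<^sub>m n - Q * Q\<^sup>T"
  have R: "R \<in> carrier_mat n n" using Q unfolding R_def by auto
  have Rx: "R *\<^sub>v x = x - Q *\<^sub>v (Q\<^sup>T *\<^sub>v x)" if "x \<in> carrier_vec n" for x
    using R_apply[OF Q that] unfolding R_def .
  define c1 where "c1 = sqrt (fro (L * Q))"
  define fS where "fS = fro (S\<^sup>T)"
  define e0 where "e0 = 1 / (2 * (fS + 1) * (c1 + 2*c1^2/s2 + 1))"
  define C where "C = (1 + c1/s2) * (2*(fS+1))"
  have c1: "0 \<le> c1" unfolding c1_def using fro_ge0 by simp
  have fS: "0 \<le> fS" unfolding fS_def using fro_ge0 by simp
  have e0: "0 < e0" unfolding e0_def using c1 fS s2 by (simp add: add_nonneg_pos)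
  show ?thesis
  proof (rule exI[of _ e0], intro conjI e0 exI[of _ C] allI impI)
    fix eps d w
    assume eps: "0 < eps" and eps0: "eps < e0" and d: "d \<in> carrier_vec n" and w: "w \<in> carrier_vec n"
      and eq: "(L + s2 \<cdot>\<^sub>m 1\<^sub>m n + (1/eps) \<cdot>\<^sub>m (V * V\<^sup>T)) *\<^sub>v d = w"
      and Rw0: "(1\<^sub>m n - Q * Q\<^sup>T) *\<^sub>v w = 0\<^sub>v n"
    have Rw: "R *\<^sub>v w = 0\<^sub>v n" using Rw0 unfolding R_def .
    define a where "a = Q\<^sup>T *\<^sub>v d"
    define b where "b = R *\<^sub>v d"
    define z where "z = L *\<^sub>v (Q *\<^sub>v a)"
    define vd where "vd = V\<^sup>T *\<^sub>v d"
    define w' where "w' = Q\<^sup>T *\<^sub>v w"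
    have a: "a \<in> carrier_vec p" unfolding a_def using Q d by auto
    have b: "b \<in> carrier_vec n" unfolding b_def using R d by auto
    have Qa: "Q *\<^sub>v a \<in> carrier_vec n" using Q a by auto
    have z: "z \<in> carrier_vec n" unfolding z_def using L Qa by auto
    have vd: "vd \<in> carrier_vec p" unfolding vd_def using V d by auto
    have w': "w' \<in> carrier_vec p" unfolding w'_def using Q w by auto
    have bdef: "b = d - Q *\<^sub>v a" unfolding b_def a_def using Rx[OF d] .
    have dab: "d = Q *\<^sub>v a + b" unfolding bdef using d Qa Q by (intro eq_vecI) auto
    have Qtb: "Q\<^sup>T *\<^sub>v b = 0\<^sub>v p"
    proof -
      have "Q\<^sup>T *\<^sub>v b = Q\<^sup>T *\<^sub>v d - Q\<^sup>T *\<^sub>v (Q *\<^sub>v a)" unfolding bdef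
        by (rule mult_minus_distrib_mat_vec) (use Q d Qa in auto)
      also have "\<dots> = a - a" using QtQ_apply[OF Q QQ a] a_def by simp
      finally show ?thesis using a by simp
    qed
    have bQ: "b \<bullet> (Q *\<^sub>v u) = 0" if u: "u \<in> carrier_vec p" for u
      using sp_transp[OF Q u b] Qtb u by simp
    have bR: "b \<bullet> (R *\<^sub>v y) = b \<bullet> y" if y: "y \<in> carrier_vec n" for y
    proof -
      have "b \<bullet> (R *\<^sub>v y) = b \<bullet> y - b \<bullet> (Q *\<^sub>v (Q\<^sup>T *\<^sub>v y))" unfolding Rx[OF y]
        by (rule scalar_prod_minus_distrib) (use b y Q in auto)
      thus ?thesis using bQ[of "Q\<^sup>T *\<^sub>v y"] Q y by simp
    qed
    have Q0: "Q *\<^sub>v 0\<^sub>v p = 0\<^sub>v n" using Q by (intro eq_vecI) auto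
    have Rb: "R *\<^sub>v b = b" using Rx[OF b] Qtb b Q0 by simp
    have RV: "R *\<^sub>v (V *\<^sub>v x) = 0\<^sub>v n" if x: "x \<in> carrier_vec p" for x
    proof -
      have Vx: "V *\<^sub>v x = Q *\<^sub>v (T *\<^sub>v x)" unfolding VQT using Q T x by simp
      have Tx: "T *\<^sub>v x \<in> carrier_vec p" using T x by simp
      show ?thesis unfolding Rx[OF mult_mat_vec_carrier[OF V x]] unfolding Vx QtQ_apply[OF Q QQ Tx]
        using Q Tx by simp
    qed
    have Vvd: "V *\<^sub>v vd \<in> carrier_vec n" using V vd by simp
    have Ld: "L *\<^sub>v d \<in> carrier_vec n" using L d by simp
    have Ad: "(L + s2 \<cdot>\<^sub>m 1\<^sub>m n + (1/eps) \<cdot>\<^sub>m (V * V\<^sup>T)) *\<^sub>v d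
              = L *\<^sub>v d + s2 \<cdot>\<^sub>v d + (1/eps) \<cdot>\<^sub>v (V *\<^sub>v vd)"
    proof -
      have "(L + s2 \<cdot>\<^sub>m 1\<^sub>m n + (1/eps) \<cdot>\<^sub>m (V * V\<^sup>T)) *\<^sub>v d
          = (L + s2 \<cdot>\<^sub>m 1\<^sub>m n) *\<^sub>v d + ((1/eps) \<cdot>\<^sub>m (V * V\<^sup>T)) *\<^sub>v d"
        by (rule add_mult_distrib_mat_vec) (use L V d in auto)
      also have "(L + s2 \<cdot>\<^sub>m 1\<^sub>m n) *\<^sub>v d = L *\<^sub>v d + (s2 \<cdot>\<^sub>m 1\<^sub>m n) *\<^sub>v d"
        by (rule add_mult_distrib_mat_vec) (use L d in auto)
      also have "(s2 \<cdot>\<^sub>m 1\<^sub>m n) *\<^sub>v d = s2 \<cdot>\<^sub>v d" using smult_mat_vec[of "1\<^sub>m n" n n d s2] d by simp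
      also have "((1/eps) \<cdot>\<^sub>m (V * V\<^sup>T)) *\<^sub>v d = (1/eps) \<cdot>\<^sub>v (V *\<^sub>v vd)"
        using smult_mat_vec[of "V * V\<^sup>T" n n d "1/eps"] d V unfolding vd_def by simp
      finally show ?thesis .
    qed
    have Adw: "L *\<^sub>v d + s2 \<cdot>\<^sub>v d + (1/eps) \<cdot>\<^sub>v (V *\<^sub>v vd) = w" using eq Ad by simp
    have bw: "b \<bullet> w = 0"
    proof -
      have "b \<bullet> w = b \<bullet> (R *\<^sub>v w)" using bR[OF w] by simp
      thus ?thesis using Rw b by simp
    qed
    have bVvd: "b \<bullet> (V *\<^sub>v vd) = 0" using bR[OF Vvd] RV[OF vd] b by simp
    have bd: "b \<bullet> d = b \<bullet> b" using bR[OF d] unfolding b_def by simp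
    have I1: "b \<bullet> (L *\<^sub>v d) + s2 * (b \<bullet> b) = 0"
    proof -
      have "b \<bullet> w = b \<bullet> (L *\<^sub>v d) + s2 * (b \<bullet> d) + (1/eps) * (b \<bullet> (V *\<^sub>v vd))"
        unfolding Adw[symmetric] using b d Ld Vvd
        by (simp add: scalar_prod_add_distrib[of _ n])
      thus ?thesis using bw bVvd bd by simp
    qed
    have Lb: "L *\<^sub>v b \<in> carrier_vec n" using L b by simp
    have Ldab: "L *\<^sub>v d = z + L *\<^sub>v b" unfolding z_def using dab L Qa b
      by (metis mult_add_distrib_mat_vec)
    have bLb: "0 \<le> b \<bullet> (L *\<^sub>v b)"
    proof -
      have "Ltilde n L Q *\<^sub>v b = R *\<^sub>v (L *\<^sub>v (R *\<^sub>v b))"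
        unfolding Ltilde_def R_def[symmetric]
      proof -
        have RL: "R * L \<in> carrier_mat n n" using R L by simp
        have Rb': "R *\<^sub>v b \<in> carrier_vec n" using R b by simp
        have "(R * L * R) *\<^sub>v b = (R * L) *\<^sub>v (R *\<^sub>v b)" by (rule assoc_mult_mat_vec[OF RL R b])
        also have "\<dots> = R *\<^sub>v (L *\<^sub>v (R *\<^sub>v b))" by (rule assoc_mult_mat_vec[OF R L Rb'])
        finally show "(R * L * R) *\<^sub>v b = R *\<^sub>v (L *\<^sub>v (R *\<^sub>v b))" .
      qed
      hence "Ltilde n L Q *\<^sub>v b = R *\<^sub>v (L *\<^sub>v b)" using Rb by simp
      hence "b \<bullet> (Ltilde n L Q *\<^sub>v b) = b \<bullet> (L *\<^sub>v b)" using bR[OF Lb] by simp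
      thus ?thesis using psd b by metis
    qed
    have I2: "b \<bullet> z + b \<bullet> (L *\<^sub>v b) + s2 * (b \<bullet> b) = 0"
      using I1 unfolding Ldab using b z Lb by (simp add: scalar_prod_add_distrib[of _ n])
    have zb: "nv z \<le> c1 * nv a"
    proof -
      have "z = (L * Q) *\<^sub>v a" unfolding z_def using L Q a by simp
      thus ?thesis using mat_vec_bound[of "L * Q" n p a] L Q a unfolding c1_def by simp
    qed
    have bzb: "\<bar>b \<bullet> z\<bar> \<le> nv b * nv z" by (rule cs_nv[OF b z])
    have h2: "s2 * nv b \<le> c1 * nv a"
    proof (cases "nv b = 0")
      case True thus ?thesis using c1 nv_ge0[of a] by simp
    next
      case False
      hence pb: "0 < nv b" using nv_ge0[of b] by simp
      have "s2 * (nv b)^2 \<le> nv b * nv z" using I2 bLb bzb unfolding nv_sq by linarith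
      also have "\<dots> \<le> nv b * (c1 * nv a)" using zb pb by simp
      finally have "nv b * (s2 * nv b) \<le> nv b * (c1 * nv a)" by (simp add: power2_eq_square algebra_simps)
      thus ?thesis using pb by simp
    qed
    have wQ: "w = Q *\<^sub>v w'"
    proof -
      have e: "w - Q *\<^sub>v w' = 0\<^sub>v n" using Rw Rx[OF w] unfolding w'_def by (simp only:)
      have Qw': "Q *\<^sub>v w' \<in> carrier_vec n" using Q w' by simp
      show ?thesis
      proof (rule eq_vecI)
        fix i assume "i < dim_vec (Q *\<^sub>v w')"
        hence i: "i < n" using Q by simp
        have "(w - Q *\<^sub>v w') $ i = 0" using e i by simp
        moreover have "(w - Q *\<^sub>v w') $ i = w $ i - (Q *\<^sub>v w') $ i"
          by (rule index_minus_vec(1)) (use i Q in simp)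
        ultimately show "w $ i = (Q *\<^sub>v w') $ i" by linarith
      qed (use w Q in simp)
    qed
    have dw: "d \<bullet> w = a \<bullet> w'" unfolding wQ using sp_transp[OF Q w' d] unfolding a_def by simp
    have dVvd: "d \<bullet> (V *\<^sub>v vd) = vd \<bullet> vd" using sp_transp[OF V vd d] unfolding vd_def by simp
    have E: "d \<bullet> (L *\<^sub>v d) + s2 * (d \<bullet> d) + (1/eps) * (vd \<bullet> vd) = a \<bullet> w'"
    proof -
      have "d \<bullet> w = d \<bullet> (L *\<^sub>v d) + s2 * (d \<bullet> d) + (1/eps) * (d \<bullet> (V *\<^sub>v vd))"
        unfolding Adw[symmetric] using d Ld Vvd
        by (simp add: scalar_prod_add_distrib[of _ n])
      thus ?thesis using dw dVvd by simp
    qed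
    have QaLb: "(Q *\<^sub>v a) \<bullet> (L *\<^sub>v b) = b \<bullet> z"
    proof -
      have "(Q *\<^sub>v a) \<bullet> (L *\<^sub>v b) = (L\<^sup>T *\<^sub>v (Q *\<^sub>v a)) \<bullet> b" by (rule sp_transp[OF L b Qa])
      also have "\<dots> = z \<bullet> b" unfolding Ls z_def ..
      also have "\<dots> = b \<bullet> z" by (rule comm_scalar_prod[OF z b])
      finally show ?thesis .
    qed
    have nQa: "nv (Q *\<^sub>v a) = nv a"
    proof -
      have "(Q *\<^sub>v a) \<bullet> (Q *\<^sub>v a) = (Q\<^sup>T *\<^sub>v (Q *\<^sub>v a)) \<bullet> a" by (rule sp_transp[OF Q a Qa])
      thus ?thesis unfolding nv_def using QtQ_apply[OF Q QQ a] by simp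
    qed
    have dLd: "d \<bullet> (L *\<^sub>v d) = (Q *\<^sub>v a) \<bullet> z + 2 * (b \<bullet> z) + b \<bullet> (L *\<^sub>v b)"
    proof -
      have "d \<bullet> (L *\<^sub>v d) = (Q *\<^sub>v a + b) \<bullet> (z + L *\<^sub>v b)" using dab Ldab by simp
      also have "\<dots> = (Q *\<^sub>v a) \<bullet> z + (Q *\<^sub>v a) \<bullet> (L *\<^sub>v b) + (b \<bullet> z + b \<bullet> (L *\<^sub>v b))"
        using Qa b z Lb by (simp add: add_scalar_prod_distrib[of _ n] scalar_prod_add_distrib[of _ n])
      finally show ?thesis unfolding QaLb by simp
    qed
    have h5: "d \<bullet> (L *\<^sub>v d) \<ge> -(nv a * nv z) - 2 * nv b * nv z"
    proof -
      have "\<bar>(Q *\<^sub>v a) \<bullet> z\<bar> \<le> nv a * nv z" using cs_nv[OF Qa z] nQa by simp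
      thus ?thesis unfolding dLd using bzb bLb by linarith
    qed
    have h3: "(nv a)^2 \<le> fS * (vd \<bullet> vd)"
    proof -
      have "a = (V * S)\<^sup>T *\<^sub>v d" unfolding a_def QVS[symmetric] ..
      also have "\<dots> = (S\<^sup>T * V\<^sup>T) *\<^sub>v d" using V S by (simp add: transpose_mult)
      also have "\<dots> = S\<^sup>T *\<^sub>v vd" unfolding vd_def using V S d by simp
      finally have "a = S\<^sup>T *\<^sub>v vd" .
      hence "nv a \<le> sqrt fS * nv vd" using mat_vec_bound[of "S\<^sup>T" p p vd] S vd unfolding fS_def by simp
      hence "(nv a)^2 \<le> (sqrt fS * nv vd)^2" using nv_ge0[of a] by (intro power_mono) auto
      thus ?thesis using fS by (simp add: power_mult_distrib nv_sq)
    qed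
    have h4: "d \<bullet> (L *\<^sub>v d) + s2 * (d \<bullet> d) + (1/eps) * (vd \<bullet> vd) \<le> nv a * nv w'"
      using E cs_nv[OF a w'] by simp
    have fin: "nv a + nv b \<le> C * eps * nv w'"
      unfolding C_def
      by (rule real_core[OF nv_ge0 nv_ge0 nv_ge0 nv_ge0 self_sp_ge0 self_sp_ge0 c1 fS s2 eps zb h2 h3 h4 h5])
         (use eps0 in \<open>simp add: e0_def\<close>)
    have "nv d \<le> nv (Q *\<^sub>v a) + nv b" using nv_add[OF Qa b] dab by simp
    thus "nv d \<le> C * eps * nv (Q\<^sup>T *\<^sub>v w)" using fin nQa unfolding w'_def by simp
  qed
qed



lemma bigO_lemma:
  assumes e0: "0 < e0" and h: "\<And>eps. 0 < eps \<Longrightarrow> eps < e0 \<Longrightarrow> \<bar>f eps\<bar> \<le> c * eps"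
  shows "(f :: real \<Rightarrow> real) \<in> O[at_right 0](\<lambda>eps. eps)"
proof (rule bigoI[where c = c])
  show "\<forall>\<^sub>F x in at_right 0. norm (f x) \<le> c * norm x"
    using eventually_at_right_real[OF e0]
    by (rule eventually_mono) (use h in auto)
qed

lemma entry_unit: assumes "(M :: real mat) \<in> carrier_mat n n" "i < n" "j < n"
  shows "M $$ (i,j) = (M *\<^sub>v unit_vec n j) $ (i :: nat)"
proof -
  have "(M *\<^sub>v unit_vec n j) $ i = row M i \<bullet> unit_vec n j" using assms by simp
  also have "\<dots> = row M i $ j" by (rule scalar_prod_right_unit[OF assms(3)])
  also have "\<dots> = M $$ (i,j)" using assms by simp
  finally show ?thesis by simp
qed

lemma psd_inj: assumes Lt: "Lt \<in> carrier_mat n n" and psd: "\<forall>x\<in>carrier_vec n. 0 \<le> x \<bullet> (Lt *\<^sub>v x)"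
  and s2: "(s2::real) > 0" and x: "x \<in> carrier_vec n" and z: "(Lt + s2 \<cdot>\<^sub>m 1\<^sub>m n) *\<^sub>v x = 0\<^sub>v n"
  shows "x = 0\<^sub>v n"
proof -
  have "(Lt + s2 \<cdot>\<^sub>m 1\<^sub>m n) *\<^sub>v x = Lt *\<^sub>v x + s2 \<cdot>\<^sub>v x"
    using Lt x by (intro eq_vecI) (auto simp: add_mult_distrib_mat_vec smult_mat_vec)
  hence "Lt *\<^sub>v x + s2 \<cdot>\<^sub>v x = 0\<^sub>v n" using z by simp
  hence "x \<bullet> (Lt *\<^sub>v x + s2 \<cdot>\<^sub>v x) = 0" using x by simp
  hence "x \<bullet> (Lt *\<^sub>v x) + s2 * (x \<bullet> x) = 0" using x Lt by (simp add: scalar_prod_add_distrib[of _ n])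
  hence "x \<bullet> x = 0" using psd x s2 self_sp_ge0[of x]
    by (smt (verit) mult_pos_pos)
  thus ?thesis by (rule self_sp_eq0[OF x])
qed


lemma vec_eq_sub: assumes "a + b = c" "a \<in> carrier_vec n" "b \<in> carrier_vec n"
  shows "a = c - (b :: real vec)"
proof (rule eq_vecI)
  fix i assume "i < dim_vec (c - b)"
  hence i: "i < n" using assms by auto
  have "(a + b) $ i = c $ i" using assms by simp
  thus "a $ i = (c - b) $ i" using i assms by auto
qed (use assms in auto)

lemma part1:
  fixes L V Q S T :: "real mat"
  assumes L: "L \<in> carrier_mat n n" and Ls: "L\<^sup>T = L"
    and V: "V \<in> carrier_mat n p" and Q: "Q \<in> carrier_mat n p" and QQ: "Q\<^sup>T * Q = 1\<^sub>m p"
    and S: "S \<in> carrier_mat p p" and QVS: "Q = V * S"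
    and T: "T \<in> carrier_mat p p" and VQT: "V = Q * T"
    and psd: "\<forall>x\<in>carrier_vec n. 0 \<le> x \<bullet> (Ltilde n L Q *\<^sub>v x)"
    and s2: "s2 > 0"
  shows "bigO_eps n (\<lambda>eps. smoother n L V s2 eps
            - (Q * Q\<^sup>T + Ltilde n L Q * minv (Ltilde n L Q + s2 \<cdot>\<^sub>m 1\<^sub>m n)))"
proof -
  define R where "R = 1\<^sub>m n - Q * Q\<^sup>T"
  define Lt where "Lt = Ltilde n L Q"
  have R: "R \<in> carrier_mat n n" using Q unfolding R_def by auto
  have LtR: "Lt = R * L * R" unfolding Lt_def Ltilde_def R_def ..
  have Lt: "Lt \<in> carrier_mat n n" unfolding LtR using R L by auto
  have Rx: "R *\<^sub>v x = x - Q *\<^sub>v (Q\<^sup>T *\<^sub>v x)" if "x \<in> carrier_vec n" for x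
    using R_apply[OF Q that] unfolding R_def .
  have Ltx: "Lt *\<^sub>v x = R *\<^sub>v (L *\<^sub>v (R *\<^sub>v x))" if x: "x \<in> carrier_vec n" for x
  proof -
    have RL: "R * L \<in> carrier_mat n n" using R L by simp
    have Rx': "R *\<^sub>v x \<in> carrier_vec n" using R x by simp
    have "(R * L * R) *\<^sub>v x = (R * L) *\<^sub>v (R *\<^sub>v x)" by (rule assoc_mult_mat_vec[OF RL R x])
    also have "\<dots> = R *\<^sub>v (L *\<^sub>v (R *\<^sub>v x))" by (rule assoc_mult_mat_vec[OF R L Rx'])
    finally show ?thesis unfolding LtR .
  qed
  have QtR: "Q\<^sup>T *\<^sub>v (R *\<^sub>v x) = 0\<^sub>v p" if x: "x \<in> carrier_vec n" for x
  proof -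
    have Qtx: "Q\<^sup>T *\<^sub>v x \<in> carrier_vec p" using Q x by simp
    have "Q\<^sup>T *\<^sub>v (R *\<^sub>v x) = Q\<^sup>T *\<^sub>v x - Q\<^sup>T *\<^sub>v (Q *\<^sub>v (Q\<^sup>T *\<^sub>v x))" unfolding Rx[OF x]
      by (rule mult_minus_distrib_mat_vec) (use Q x in auto)
    also have "\<dots> = 0\<^sub>v p" unfolding QtQ_apply[OF Q QQ Qtx] using Qtx by simp
    finally show ?thesis .
  qed
  have RQ: "R *\<^sub>v (Q *\<^sub>v u) = 0\<^sub>v n" if u: "u \<in> carrier_vec p" for u
  proof -
    have Qu: "Q *\<^sub>v u \<in> carrier_vec n" using Q u by simp
    show ?thesis unfolding Rx[OF Qu] QtQ_apply[OF Q QQ u] using Qu by simp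
  qed
  have QtLt: "Q\<^sup>T *\<^sub>v (Lt *\<^sub>v x) = 0\<^sub>v p" if x: "x \<in> carrier_vec n" for x
    unfolding Ltx[OF x] by (rule QtR) (use L R x in simp)
  have LtQ: "Lt *\<^sub>v (Q *\<^sub>v u) = 0\<^sub>v n" if u: "u \<in> carrier_vec p" for u
  proof -
    have "L *\<^sub>v 0\<^sub>v n = 0\<^sub>v n" "R *\<^sub>v 0\<^sub>v n = 0\<^sub>v n" using L R by (auto intro!: eq_vecI)
    thus ?thesis unfolding Ltx[OF mult_mat_vec_carrier[OF Q u]] RQ[OF u] by simp
  qed
  define B where "B = Lt + s2 \<cdot>\<^sub>m 1\<^sub>m n"
  have B: "B \<in> carrier_mat n n" unfolding B_def using Lt by simp
  have Bx: "B *\<^sub>v x = Lt *\<^sub>v x + s2 \<cdot>\<^sub>v x" if x: "x \<in> carrier_vec n" for x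
    unfolding B_def using Lt x by (intro eq_vecI) (auto simp: add_mult_distrib_mat_vec smult_mat_vec)
  have psdLt: "\<forall>x\<in>carrier_vec n. 0 \<le> x \<bullet> (Lt *\<^sub>v x)" using psd unfolding Lt_def .
  define H where "H = minv B"
  have BH: "B * H = 1\<^sub>m n" and H: "H \<in> carrier_mat n n"
    using minv_inv[OF B psd_inj[OF Lt psdLt s2, folded B_def]] unfolding H_def by auto
  obtain e0 C where e0: "0 < e0" and cor: "\<And>eps d w. 0 < eps \<Longrightarrow> eps < e0 \<Longrightarrow> d \<in> carrier_vec n \<Longrightarrow> w \<in> carrier_vec n \<Longrightarrow>
      (L + s2 \<cdot>\<^sub>m 1\<^sub>m n + (1/eps) \<cdot>\<^sub>m (V * V\<^sup>T)) *\<^sub>v d = w \<Longrightarrow> (1\<^sub>m n - Q * Q\<^sup>T) *\<^sub>v w = 0\<^sub>v n \<Longrightarrow>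
      nv d \<le> C * eps * nv (Q\<^sup>T *\<^sub>v w)"
    using core[OF L Ls V Q QQ S QVS T VQT psd s2] by blast
  show ?thesis unfolding bigO_eps_def
  proof (intro allI impI)
    fix i j assume i: "i < n" and j: "j < n"
    define e :: "real vec" where "e = unit_vec n j"
    define h where "h = H *\<^sub>v e"
    define pe where "pe = Q *\<^sub>v (Q\<^sup>T *\<^sub>v e)"
    define k where "k = h - (1/s2) \<cdot>\<^sub>v pe"
    define w where "w = e - (L *\<^sub>v k + s2 \<cdot>\<^sub>v k)"
    have e: "e \<in> carrier_vec n" unfolding e_def by simp
    have h: "h \<in> carrier_vec n" unfolding h_def using H e by simp
    have pe: "pe \<in> carrier_vec n" unfolding pe_def using Q e by simp
    have k: "k \<in> carrier_vec n" unfolding k_def using h pe by simp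
    have Lk: "L *\<^sub>v k \<in> carrier_vec n" using L k by simp
    have w: "w \<in> carrier_vec n" unfolding w_def using e Lk k by simp
    have Lth: "Lt *\<^sub>v h \<in> carrier_vec n" using Lt h by simp
    have Qte: "Q\<^sup>T *\<^sub>v e \<in> carrier_vec p" using Q e by simp
    have f1: "Lt *\<^sub>v h + s2 \<cdot>\<^sub>v h = e"
    proof -
      have "B *\<^sub>v h = (B * H) *\<^sub>v e" unfolding h_def using B H e by simp
      thus ?thesis using BH e Bx[OF h] by simp
    qed
    have Qtpe: "Q\<^sup>T *\<^sub>v pe = Q\<^sup>T *\<^sub>v e" unfolding pe_def by (rule QtQ_apply[OF Q QQ Qte])
    have Qth: "s2 \<cdot>\<^sub>v (Q\<^sup>T *\<^sub>v h) = Q\<^sup>T *\<^sub>v e"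
    proof -
      have "Q\<^sup>T *\<^sub>v e = Q\<^sup>T *\<^sub>v (Lt *\<^sub>v h) + Q\<^sup>T *\<^sub>v (s2 \<cdot>\<^sub>v h)" unfolding f1[symmetric]
        by (rule mult_add_distrib_mat_vec) (use Q Lth h in auto)
      also have "Q\<^sup>T *\<^sub>v (s2 \<cdot>\<^sub>v h) = s2 \<cdot>\<^sub>v (Q\<^sup>T *\<^sub>v h)" by (rule mult_mat_vec) (use Q h in auto)
      finally show ?thesis unfolding QtLt[OF h] using Q h by simp
    qed
    have f4: "Q\<^sup>T *\<^sub>v k = 0\<^sub>v p"
    proof -
      have "Q\<^sup>T *\<^sub>v k = Q\<^sup>T *\<^sub>v h - Q\<^sup>T *\<^sub>v ((1/s2) \<cdot>\<^sub>v pe)" unfolding k_def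
        by (rule mult_minus_distrib_mat_vec) (use Q h pe in auto)
      also have "Q\<^sup>T *\<^sub>v ((1/s2) \<cdot>\<^sub>v pe) = (1/s2) \<cdot>\<^sub>v (Q\<^sup>T *\<^sub>v pe)" by (rule mult_mat_vec) (use Q pe in auto)
      finally have eq: "Q\<^sup>T *\<^sub>v k = Q\<^sup>T *\<^sub>v h - (1/s2) \<cdot>\<^sub>v (Q\<^sup>T *\<^sub>v e)" unfolding Qtpe .
      show ?thesis
      proof (rule eq_vecI)
        fix l assume "l < dim_vec (0\<^sub>v p)"
        hence l: "l < p" by simp
        have "(s2 \<cdot>\<^sub>v (Q\<^sup>T *\<^sub>v h)) $ l = (Q\<^sup>T *\<^sub>v e) $ l" using Qth by simp
        hence "s2 * (Q\<^sup>T *\<^sub>v h) $ l = (Q\<^sup>T *\<^sub>v e) $ l" using l Q by simp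
        thus "(Q\<^sup>T *\<^sub>v k) $ l = 0\<^sub>v p $ l" unfolding eq using l Q s2 by (simp add: field_simps)
      qed (use Q in simp)
    qed
    have f5: "V\<^sup>T *\<^sub>v k = 0\<^sub>v p"
    proof -
      have "V\<^sup>T = T\<^sup>T * Q\<^sup>T" unfolding VQT using Q T by (simp add: transpose_mult)
      hence "V\<^sup>T *\<^sub>v k = T\<^sup>T *\<^sub>v (Q\<^sup>T *\<^sub>v k)" using Q T k by simp
      thus ?thesis unfolding f4 using T by (auto intro!: eq_vecI)
    qed
    have Rk: "R *\<^sub>v k = k" using Rx[OF k] unfolding f4 using Q k by (auto intro!: eq_vecI)
    have Ltk: "Lt *\<^sub>v k = Lt *\<^sub>v h"
    proof -
      have "Lt *\<^sub>v k = Lt *\<^sub>v h - Lt *\<^sub>v ((1/s2) \<cdot>\<^sub>v pe)" unfolding k_def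
        by (rule mult_minus_distrib_mat_vec) (use Lt h pe in auto)
      also have "Lt *\<^sub>v ((1/s2) \<cdot>\<^sub>v pe) = (1/s2) \<cdot>\<^sub>v (Lt *\<^sub>v pe)" by (rule mult_mat_vec) (use Lt pe in auto)
      also have "Lt *\<^sub>v pe = 0\<^sub>v n" unfolding pe_def by (rule LtQ[OF Qte])
      finally show ?thesis using Lth Lt by (auto intro!: eq_vecI)
    qed
    have RLk: "R *\<^sub>v (L *\<^sub>v k) = Lt *\<^sub>v h" using Ltx[OF k] Rk Ltk by simp
    have Re: "R *\<^sub>v e = e - pe" unfolding Rx[OF e] pe_def ..
    have f7: "R *\<^sub>v w = 0\<^sub>v n"
    proof -
      have "R *\<^sub>v w = R *\<^sub>v e - R *\<^sub>v (L *\<^sub>v k + s2 \<cdot>\<^sub>v k)" unfolding w_def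
        by (rule mult_minus_distrib_mat_vec) (use R e Lk k in auto)
      also have "R *\<^sub>v (L *\<^sub>v k + s2 \<cdot>\<^sub>v k) = R *\<^sub>v (L *\<^sub>v k) + R *\<^sub>v (s2 \<cdot>\<^sub>v k)"
        by (rule mult_add_distrib_mat_vec) (use R Lk k in auto)
      also have "R *\<^sub>v (s2 \<cdot>\<^sub>v k) = s2 \<cdot>\<^sub>v (R *\<^sub>v k)" by (rule mult_mat_vec) (use R k in auto)
      finally have eq: "R *\<^sub>v w = (e - pe) - (Lt *\<^sub>v h + s2 \<cdot>\<^sub>v k)" unfolding Re RLk Rk .
      show ?thesis
      proof (rule eq_vecI)
        fix l assume "l < dim_vec (0\<^sub>v n)"
        hence l: "l < n" by simp
        have "(Lt *\<^sub>v h + s2 \<cdot>\<^sub>v h) $ l = e $ l" using f1 by simp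
        hence "(Lt *\<^sub>v h) $ l + s2 * h $ l = e $ l" using l Lt h by simp
        thus "(R *\<^sub>v w) $ l = 0\<^sub>v n $ l" unfolding eq k_def using l Lt h pe e s2
          by (simp add: field_simps) (metis distrib_left)
      qed (use R in simp)
    qed
    show "(\<lambda>eps. (smoother n L V s2 eps - (Q * Q\<^sup>T + Ltilde n L Q * minv (Ltilde n L Q + s2 \<cdot>\<^sub>m 1\<^sub>m n))) $$ (i, j))
          \<in> O[at_right 0](\<lambda>eps. eps)"
    proof (rule bigO_lemma[OF e0, where c = "s2 * C * nv (Q\<^sup>T *\<^sub>v w)"])
      fix eps :: real assume eps: "0 < eps" and eps0: "eps < e0"
      define A where "A = L + s2 \<cdot>\<^sub>m 1\<^sub>m n + (1/eps) \<cdot>\<^sub>m (V * V\<^sup>T)"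
      define M where "M = L + (1/eps) \<cdot>\<^sub>m (V * V\<^sup>T)"
      have A: "A \<in> carrier_mat n n" unfolding A_def using L V by simp
      have M: "M \<in> carrier_mat n n" unfolding M_def using L V by simp
      have Ainj: "d = 0\<^sub>v n" if d: "d \<in> carrier_vec n" and Ad: "A *\<^sub>v d = 0\<^sub>v n" for d
      proof -
        have "R *\<^sub>v 0\<^sub>v n = 0\<^sub>v n" using R by auto
        hence "(1\<^sub>m n - Q * Q\<^sup>T) *\<^sub>v 0\<^sub>v n = 0\<^sub>v n" unfolding R_def .
        hence "nv d \<le> C * eps * nv (Q\<^sup>T *\<^sub>v 0\<^sub>v n)" using cor[OF eps eps0 d _ Ad[unfolded A_def]] by simp
        moreover have "Q\<^sup>T *\<^sub>v 0\<^sub>v n = 0\<^sub>v p" using Q by (auto intro!: eq_vecI)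
        moreover have "nv (0\<^sub>v p) = 0" unfolding nv_def by simp
        ultimately have "nv d \<le> 0" by simp
        hence "nv d = 0" using nv_ge0[of d] by simp
        hence "d \<bullet> d = 0" using nv_sq[of d] by simp
        thus ?thesis by (rule self_sp_eq0[OF d])
      qed
      define X where "X = minv A"
      have AX: "A * X = 1\<^sub>m n" and X: "X \<in> carrier_mat n n"
        using minv_inv[OF A Ainj] unfolding X_def by auto
      define x where "x = X *\<^sub>v e"
      have x: "x \<in> carrier_vec n" unfolding x_def using X e by simp
      have g1: "A *\<^sub>v x = e" unfolding x_def using A X e AX
        by (metis assoc_mult_mat_vec one_mult_mat_vec)
      have G: "(1/eps) \<cdot>\<^sub>m (V * V\<^sup>T) \<in> carrier_mat n n" using V by simp
      have Gy: "((1/eps) \<cdot>\<^sub>m (V * V\<^sup>T)) *\<^sub>v y = (1/eps) \<cdot>\<^sub>v (V *\<^sub>v (V\<^sup>T *\<^sub>v y))"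
        if y: "y \<in> carrier_vec n" for y
        using smult_mat_vec[of "V * V\<^sup>T" n n y "1/eps"] V y by simp
      have My: "M *\<^sub>v y = L *\<^sub>v y + (1/eps) \<cdot>\<^sub>v (V *\<^sub>v (V\<^sup>T *\<^sub>v y))" if y: "y \<in> carrier_vec n" for y
      proof -
        have "M *\<^sub>v y = L *\<^sub>v y + ((1/eps) \<cdot>\<^sub>m (V * V\<^sup>T)) *\<^sub>v y" unfolding M_def
          by (rule add_mult_distrib_mat_vec) (use L G y in auto)
        thus ?thesis unfolding Gy[OF y] .
      qed
      have Ay: "A *\<^sub>v y = M *\<^sub>v y + s2 \<cdot>\<^sub>v y" if y: "y \<in> carrier_vec n" for y
      proof -
        have "A *\<^sub>v y = (L + s2 \<cdot>\<^sub>m 1\<^sub>m n) *\<^sub>v y + ((1/eps) \<cdot>\<^sub>m (V * V\<^sup>T)) *\<^sub>v y" unfolding A_def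
          by (rule add_mult_distrib_mat_vec) (use L G y in auto)
        also have "(L + s2 \<cdot>\<^sub>m 1\<^sub>m n) *\<^sub>v y = L *\<^sub>v y + (s2 \<cdot>\<^sub>m 1\<^sub>m n) *\<^sub>v y"
          by (rule add_mult_distrib_mat_vec) (use L y in auto)
        also have "(s2 \<cdot>\<^sub>m 1\<^sub>m n) *\<^sub>v y = s2 \<cdot>\<^sub>v y" using smult_mat_vec[of "1\<^sub>m n" n n y s2] y by simp
        finally have "A *\<^sub>v y = L *\<^sub>v y + s2 \<cdot>\<^sub>v y + (1/eps) \<cdot>\<^sub>v (V *\<^sub>v (V\<^sup>T *\<^sub>v y))" unfolding Gy[OF y] .
        thus ?thesis unfolding My[OF y] using L V y by (auto intro!: eq_vecI)
      qed
      have g2: "A *\<^sub>v k = L *\<^sub>v k + s2 \<cdot>\<^sub>v k"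
      proof -
        have "V *\<^sub>v 0\<^sub>v p = 0\<^sub>v n" using V by (auto intro!: eq_vecI)
        thus ?thesis unfolding Ay[OF k] My[OF k] f5 using Lk k by (auto intro!: eq_vecI)
      qed
      define d where "d = x - k"
      have d: "d \<in> carrier_vec n" unfolding d_def using x k by simp
      have g3: "A *\<^sub>v d = w"
      proof -
        have "A *\<^sub>v d = A *\<^sub>v x - A *\<^sub>v k" unfolding d_def
          by (rule mult_minus_distrib_mat_vec) (use A x k in auto)
        thus ?thesis unfolding g1 g2 w_def .
      qed
      have nd: "nv d \<le> C * eps * nv (Q\<^sup>T *\<^sub>v w)"
        by (rule cor[OF eps eps0 d w g3[unfolded A_def]]) (use f7 R_def in simp)
      have sm: "smoother n L V s2 eps = M * X" unfolding smoother_def M_def X_def A_def ..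
      have g4: "(M * X) *\<^sub>v e = e - s2 \<cdot>\<^sub>v x"
      proof -
        have "(M * X) *\<^sub>v e = M *\<^sub>v x" unfolding x_def using M X e by simp
        moreover have "M *\<^sub>v x + s2 \<cdot>\<^sub>v x = e" using Ay[OF x] g1 by simp
        ultimately show ?thesis using M x e by (auto intro!: eq_vecI simp: algebra_simps)
      qed
      have g5: "(Q * Q\<^sup>T + Lt * H) *\<^sub>v e = pe + (e - s2 \<cdot>\<^sub>v h)"
      proof -
        have "(Q * Q\<^sup>T + Lt * H) *\<^sub>v e = (Q * Q\<^sup>T) *\<^sub>v e + (Lt * H) *\<^sub>v e"
          by (rule add_mult_distrib_mat_vec) (use Q Lt H e in auto)
        also have "(Q * Q\<^sup>T) *\<^sub>v e = pe" unfolding pe_def using Q e by simp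
        also have "(Lt * H) *\<^sub>v e = Lt *\<^sub>v h" unfolding h_def using Lt H e by simp
        also have "Lt *\<^sub>v h = e - s2 \<cdot>\<^sub>v h" by (rule vec_eq_sub[OF f1 Lth]) (use h in simp)
        finally show ?thesis .
      qed
      have entry: "(smoother n L V s2 eps - (Q * Q\<^sup>T + Lt * H)) $$ (i, j) = - s2 * d $ i"
      proof -
        have "(smoother n L V s2 eps - (Q * Q\<^sup>T + Lt * H)) $$ (i, j) = (M * X) $$ (i,j) - (Q * Q\<^sup>T + Lt * H) $$ (i,j)"
          unfolding sm using M X Q Lt H i j by simp
        also have "(M * X) $$ (i,j) = ((M * X) *\<^sub>v e) $ i" unfolding e_def
          by (rule entry_unit) (use M X i j in auto)
        also have "(Q * Q\<^sup>T + Lt * H) $$ (i,j) = ((Q * Q\<^sup>T + Lt * H) *\<^sub>v e) $ i" unfolding e_def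
          by (rule entry_unit) (use Q Lt H i j in auto)
        finally have F1: "(smoother n L V s2 eps - (Q * Q\<^sup>T + Lt * H)) $$ (i, j)
           = (e - s2 \<cdot>\<^sub>v x) $ i - (pe + (e - s2 \<cdot>\<^sub>v h)) $ i" unfolding g4 g5 .
        have F2: "(e - s2 \<cdot>\<^sub>v x) $ i - (pe + (e - s2 \<cdot>\<^sub>v h)) $ i = s2 * h $ i - s2 * x $ i - pe $ i"
          using i x e pe h by simp
        have D: "- s2 * d $ i = s2 * h $ i - s2 * x $ i - pe $ i"
          unfolding d_def k_def using i x h pe s2 by (simp add: field_simps)
        show ?thesis using F1 F2 D by simp
      qed
      have "\<bar>d $ i\<bar> \<le> nv d" by (rule idx_le_nv[OF d i])
      hence "\<bar>- s2 * d $ i\<bar> \<le> s2 * (C * eps * nv (Q\<^sup>T *\<^sub>v w))" using nd s2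
        by (simp add: abs_mult)
      thus "\<bar>(smoother n L V s2 eps - (Q * Q\<^sup>T + Ltilde n L Q * minv (Ltilde n L Q + s2 \<cdot>\<^sub>m 1\<^sub>m n))) $$ (i, j)\<bar>
            \<le> s2 * C * nv (Q\<^sup>T *\<^sub>v w) * eps"
        using entry unfolding H_def B_def Lt_def by (simp add: algebra_simps)
    qed
  qed
qed


lemma shift_apply: assumes "M \<in> carrier_mat n n" "x \<in> carrier_vec n"
  shows "(M + s \<cdot>\<^sub>m 1\<^sub>m n) *\<^sub>v x = M *\<^sub>v x + s \<cdot>\<^sub>v (x :: real vec)"
  using assms by (intro eq_vecI) (auto simp: add_mult_distrib_mat_vec smult_mat_vec)

lemma spectral_eq:
  fixes Lt U Lam :: "real mat"
  assumes Lt: "Lt \<in> carrier_mat n n" and psd: "\<forall>x\<in>carrier_vec n. 0 \<le> x \<bullet> (Lt *\<^sub>v x)" and s2: "s2 > 0"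
    and U: "U \<in> carrier_mat n r" and Lam: "Lam \<in> carrier_mat r r" and UU: "U\<^sup>T * U = 1\<^sub>m r"
    and LtU: "Lt = U * Lam * U\<^sup>T"
  shows "U * Lam * minv (Lam + s2 \<cdot>\<^sub>m 1\<^sub>m r) * U\<^sup>T = Lt * minv (Lt + s2 \<cdot>\<^sub>m 1\<^sub>m n)"
proof -
  define B where "B = Lt + s2 \<cdot>\<^sub>m 1\<^sub>m n"
  define H where "H = minv B"
  have B: "B \<in> carrier_mat n n" unfolding B_def using Lt by simp
  have Binj: "\<And>v. v \<in> carrier_vec n \<Longrightarrow> B *\<^sub>v v = 0\<^sub>v n \<Longrightarrow> v = 0\<^sub>v n"
    using psd_inj[OF Lt psd s2] unfolding B_def by blast
  have BH: "B * H = 1\<^sub>m n" and H: "H \<in> carrier_mat n n"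
    using minv_inv[OF B Binj] unfolding H_def by auto
  have Ltv: "Lt *\<^sub>v v = U *\<^sub>v (Lam *\<^sub>v (U\<^sup>T *\<^sub>v v))" if v: "v \<in> carrier_vec n" for v
  proof -
    have UL: "U * Lam \<in> carrier_mat n r" using U Lam by simp
    have Utv: "U\<^sup>T *\<^sub>v v \<in> carrier_vec r" using U v by simp
    have "(U * Lam * U\<^sup>T) *\<^sub>v v = (U * Lam) *\<^sub>v (U\<^sup>T *\<^sub>v v)" by (rule assoc_mult_mat_vec) (use UL U v in auto)
    also have "\<dots> = U *\<^sub>v (Lam *\<^sub>v (U\<^sup>T *\<^sub>v v))" by (rule assoc_mult_mat_vec[OF U Lam Utv])
    finally show ?thesis unfolding LtU .
  qed
  have LtUx: "Lt *\<^sub>v (U *\<^sub>v x) = U *\<^sub>v (Lam *\<^sub>v x)" if x: "x \<in> carrier_vec r" for x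
    using Ltv[of "U *\<^sub>v x"] QtQ_apply[OF U UU x] U x by simp
  have psdLam: "\<forall>x\<in>carrier_vec r. 0 \<le> x \<bullet> (Lam *\<^sub>v x)"
  proof
    fix x :: "real vec" assume x: "x \<in> carrier_vec r"
    have Ux: "U *\<^sub>v x \<in> carrier_vec n" using U x by simp
    have Lx: "Lam *\<^sub>v x \<in> carrier_vec r" using Lam x by simp
    have "Lam *\<^sub>v x = U\<^sup>T *\<^sub>v (Lt *\<^sub>v (U *\<^sub>v x))" unfolding LtUx[OF x] using QtQ_apply[OF U UU Lx] by simp
    hence "x \<bullet> (Lam *\<^sub>v x) = x \<bullet> (U\<^sup>T *\<^sub>v (Lt *\<^sub>v (U *\<^sub>v x)))" by simp
    also have "\<dots> = (U\<^sup>T\<^sup>T *\<^sub>v x) \<bullet> (Lt *\<^sub>v (U *\<^sub>v x))"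
      by (rule sp_transp) (use U x Lt Ux in auto)
    also have "\<dots> = (U *\<^sub>v x) \<bullet> (Lt *\<^sub>v (U *\<^sub>v x))" by simp
    finally show "0 \<le> x \<bullet> (Lam *\<^sub>v x)" using psd Ux by simp
  qed
  define Lam2 where "Lam2 = Lam + s2 \<cdot>\<^sub>m 1\<^sub>m r"
  define Y where "Y = minv Lam2"
  have Lam2: "Lam2 \<in> carrier_mat r r" unfolding Lam2_def using Lam by simp
  have L2inj: "\<And>v. v \<in> carrier_vec r \<Longrightarrow> Lam2 *\<^sub>v v = 0\<^sub>v r \<Longrightarrow> v = 0\<^sub>v r"
    using psd_inj[OF Lam psdLam s2] unfolding Lam2_def by blast
  have LY: "Lam2 * Y = 1\<^sub>m r" and Y: "Y \<in> carrier_mat r r"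
    using minv_inv[OF Lam2 L2inj] unfolding Y_def by auto
  show ?thesis unfolding Lam2_def[symmetric] Y_def[symmetric] B_def[symmetric] H_def[symmetric]
  proof (rule eq_matI)
    fix i j assume i: "i < dim_row (Lt * H)" and j: "j < dim_col (Lt * H)"
    hence i: "i < n" and j: "j < n" using Lt H by auto
    define e :: "real vec" where "e = unit_vec n j"
    have e: "e \<in> carrier_vec n" unfolding e_def by simp
    define u where "u = U\<^sup>T *\<^sub>v e"
    define y where "y = Y *\<^sub>v u"
    define g where "g = U *\<^sub>v (Lam *\<^sub>v y)"
    define h where "h = H *\<^sub>v e"
    have u: "u \<in> carrier_vec r" unfolding u_def using U e by simp
    have y: "y \<in> carrier_vec r" unfolding y_def using Y u by simp
    have Ly: "Lam *\<^sub>v y \<in> carrier_vec r" using Lam y by simp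
    have g: "g \<in> carrier_vec n" unfolding g_def using U Ly by simp
    have h: "h \<in> carrier_vec n" unfolding h_def using H e by simp
    have Lth: "Lt *\<^sub>v h \<in> carrier_vec n" using Lt h by simp
    have c1: "U * Lam * Y \<in> carrier_mat n r" using mult_carrier_mat[OF mult_carrier_mat[OF U Lam] Y] .
    have Ut: "U\<^sup>T \<in> carrier_mat r n" using U by simp
    have CUL: "U * Lam * Y * U\<^sup>T \<in> carrier_mat n n" using mult_carrier_mat[OF c1 Ut] .
    have lhs: "(U * Lam * Y * U\<^sup>T) *\<^sub>v e = g"
    proof -
      have "(U * Lam * Y * U\<^sup>T) *\<^sub>v e = (U * Lam * Y) *\<^sub>v u" unfolding u_def
        by (rule assoc_mult_mat_vec) (use U Lam Y e in auto)
      also have "\<dots> = (U * Lam) *\<^sub>v y" unfolding y_def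
        by (rule assoc_mult_mat_vec) (use U Lam Y u in auto)
      also have "\<dots> = g" unfolding g_def by (rule assoc_mult_mat_vec[OF U Lam y])
      finally show ?thesis .
    qed
    have rhs: "(Lt * H) *\<^sub>v e = Lt *\<^sub>v h" unfolding h_def using Lt H e by simp
    have Bh: "Lt *\<^sub>v h + s2 \<cdot>\<^sub>v h = e"
    proof -
      have "B *\<^sub>v h = (B * H) *\<^sub>v e" unfolding h_def using B H e by simp
      thus ?thesis using BH e shift_apply[OF Lt h, of s2] unfolding B_def by simp
    qed
    have L2y: "Lam *\<^sub>v y + s2 \<cdot>\<^sub>v y = u"
    proof -
      have "Lam2 *\<^sub>v y = (Lam2 * Y) *\<^sub>v u" unfolding y_def using Lam2 Y u by simp
      thus ?thesis using LY u shift_apply[OF Lam y, of s2] unfolding Lam2_def by simp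
    qed
    have BLth: "B *\<^sub>v (Lt *\<^sub>v h) = Lt *\<^sub>v e"
    proof -
      have "B *\<^sub>v (Lt *\<^sub>v h) = Lt *\<^sub>v (Lt *\<^sub>v h) + s2 \<cdot>\<^sub>v (Lt *\<^sub>v h)"
        unfolding B_def by (rule shift_apply[OF Lt Lth])
      also have "s2 \<cdot>\<^sub>v (Lt *\<^sub>v h) = Lt *\<^sub>v (s2 \<cdot>\<^sub>v h)" by (rule mult_mat_vec[symmetric]) (use Lt h in auto)
      also have "Lt *\<^sub>v (Lt *\<^sub>v h) + Lt *\<^sub>v (s2 \<cdot>\<^sub>v h) = Lt *\<^sub>v (Lt *\<^sub>v h + s2 \<cdot>\<^sub>v h)"
        by (rule mult_add_distrib_mat_vec[symmetric]) (use Lt Lth h in auto)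
      finally show ?thesis unfolding Bh .
    qed
    have Bg: "B *\<^sub>v g = Lt *\<^sub>v e"
    proof -
      have "B *\<^sub>v g = Lt *\<^sub>v g + s2 \<cdot>\<^sub>v g" unfolding B_def by (rule shift_apply[OF Lt g])
      also have "Lt *\<^sub>v g = U *\<^sub>v (Lam *\<^sub>v (Lam *\<^sub>v y))" unfolding g_def by (rule LtUx[OF Ly])
      also have "s2 \<cdot>\<^sub>v g = U *\<^sub>v (Lam *\<^sub>v (s2 \<cdot>\<^sub>v y))" unfolding g_def
        using mult_mat_vec[OF U Ly, of s2] mult_mat_vec[OF Lam y, of s2] by simp
      also have "U *\<^sub>v (Lam *\<^sub>v (Lam *\<^sub>v y)) + U *\<^sub>v (Lam *\<^sub>v (s2 \<cdot>\<^sub>v y)) = U *\<^sub>v (Lam *\<^sub>v (Lam *\<^sub>v y) + Lam *\<^sub>v (s2 \<cdot>\<^sub>v y))"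
        by (rule mult_add_distrib_mat_vec[symmetric]) (use U Lam Ly y in auto)
      also have "Lam *\<^sub>v (Lam *\<^sub>v y) + Lam *\<^sub>v (s2 \<cdot>\<^sub>v y) = Lam *\<^sub>v (Lam *\<^sub>v y + s2 \<cdot>\<^sub>v y)"
        by (rule mult_add_distrib_mat_vec[symmetric]) (use Lam Ly y in auto)
      also have "U *\<^sub>v (Lam *\<^sub>v (Lam *\<^sub>v y + s2 \<cdot>\<^sub>v y)) = Lt *\<^sub>v e" unfolding L2y u_def Ltv[OF e] ..
      finally show ?thesis .
    qed
    have "B *\<^sub>v (g - Lt *\<^sub>v h) = B *\<^sub>v g - B *\<^sub>v (Lt *\<^sub>v h)"
      by (rule mult_minus_distrib_mat_vec) (use B g Lth in auto)
    also have "\<dots> = 0\<^sub>v n" unfolding Bg BLth using Lt e by (auto intro!: eq_vecI)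
    finally have Bz: "B *\<^sub>v (g - Lt *\<^sub>v h) = 0\<^sub>v n" .
    have z: "g - Lt *\<^sub>v h = 0\<^sub>v n" by (rule Binj[OF _ Bz]) (use g Lth in simp)
    have geq: "g = Lt *\<^sub>v h"
    proof (rule eq_vecI)
      fix l assume "l < dim_vec (Lt *\<^sub>v h)"
      hence l: "l < n" using Lt by simp
      have "(g - Lt *\<^sub>v h) $ l = 0" using z l by simp
      moreover have "(g - Lt *\<^sub>v h) $ l = g $ l - (Lt *\<^sub>v h) $ l"
        by (rule index_minus_vec(1)) (use l Lt in simp)
      ultimately show "g $ l = (Lt *\<^sub>v h) $ l" by linarith
    qed (use g Lt in simp)
    have "(U * Lam * Y * U\<^sup>T) $$ (i,j) = ((U * Lam * Y * U\<^sup>T) *\<^sub>v e) $ i" unfolding e_def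
      by (rule entry_unit[OF CUL i j])
    also have "\<dots> = ((Lt * H) *\<^sub>v e) $ i" unfolding lhs rhs geq ..
    also have "\<dots> = (Lt * H) $$ (i,j)" unfolding e_def
      by (rule entry_unit[symmetric]) (use Lt H i j in auto)
    finally show "(U * Lam * Y * U\<^sup>T) $$ (i,j) = (Lt * H) $$ (i,j)" .
  qed (use mult_carrier_mat[OF mult_carrier_mat[OF mult_carrier_mat[OF U Lam] Y], of "U\<^sup>T" n] U Lt H in auto)
qed


theorem mainTheorem7:
  fixes n p :: nat and L V Q :: "real mat" and s2 :: real
  assumes "L \<in> carrier_mat n n" and "L\<^sup>T = L"
    and "p \<le> n"
    and "V \<in> carrier_mat n p" and "full_col_rank V"
    and "Q \<in> carrier_mat n p" and "Q\<^sup>T * Q = 1\<^sub>m p" and "colspace Q = colspace V"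
    and "psd_mat n (Ltilde n L Q)"
    and "s2 > 0"
  shows "bigO_eps n (\<lambda>eps. smoother n L V s2 eps
            - (Q * Q\<^sup>T + Ltilde n L Q * minv (Ltilde n L Q + s2 \<cdot>\<^sub>m 1\<^sub>m n)))
    \<and> (\<forall>r U Lam. trunc_spectral n r (Ltilde n L Q) U Lam \<longrightarrow>
         bigO_eps n (\<lambda>eps. smoother n L V s2 eps
            - (Q * Q\<^sup>T + U * Lam * minv (Lam + s2 \<cdot>\<^sub>m 1\<^sub>m r) * U\<^sup>T)))"
proof -
  note L = assms(1) and Ls = assms(2) and V = assms(4) and Q = assms(6) and QQ = assms(7)
    and cs = assms(8) and s2 = assms(10)
  obtain T where T: "T \<in> carrier_mat p p" and VQT: "V = Q * T"
    using colspace_factor[OF V Q] cs by auto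
  obtain S where S: "S \<in> carrier_mat p p" and QVS: "Q = V * S"
    using colspace_factor[OF Q V] cs by auto
  have Lt: "Ltilde n L Q \<in> carrier_mat n n" and psd: "\<forall>x\<in>carrier_vec n. 0 \<le> x \<bullet> (Ltilde n L Q *\<^sub>v x)"
    using assms(9) unfolding psd_mat_def by auto
  have P1: "bigO_eps n (\<lambda>eps. smoother n L V s2 eps
            - (Q * Q\<^sup>T + Ltilde n L Q * minv (Ltilde n L Q + s2 \<cdot>\<^sub>m 1\<^sub>m n)))"
    by (rule part1[OF L Ls V Q QQ S QVS T VQT psd s2])
  moreover have "\<forall>r U Lam. trunc_spectral n r (Ltilde n L Q) U Lam \<longrightarrow>
         bigO_eps n (\<lambda>eps. smoother n L V s2 eps
            - (Q * Q\<^sup>T + U * Lam * minv (Lam + s2 \<cdot>\<^sub>m 1\<^sub>m r) * U\<^sup>T))"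
  proof (intro allI impI)
    fix r U Lam assume ts: "trunc_spectral n r (Ltilde n L Q) U Lam"
    have U: "U \<in> carrier_mat n r" and Lam: "Lam \<in> carrier_mat r r" and UU: "U\<^sup>T * U = 1\<^sub>m r"
      and LtU: "Ltilde n L Q = U * Lam * U\<^sup>T"
      using ts unfolding trunc_spectral_def by auto
    have "U * Lam * minv (Lam + s2 \<cdot>\<^sub>m 1\<^sub>m r) * U\<^sup>T = Ltilde n L Q * minv (Ltilde n L Q + s2 \<cdot>\<^sub>m 1\<^sub>m n)"
      by (rule spectral_eq[OF Lt psd s2 U Lam UU LtU])
    thus "bigO_eps n (\<lambda>eps. smoother n L V s2 eps
            - (Q * Q\<^sup>T + U * Lam * minv (Lam + s2 \<cdot>\<^sub>m 1\<^sub>m r) * U\<^sup>T))" using P1 by simp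
  qed
  ultimately show ?thesis by blast
qed

end
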